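(* Let $\mathcal{X}$ be a finite set and $\underline{Q}$ a lower transition rate operator on $\mathcal{L}(\mathcal{X})$. Then for any $t>0$: $\underline{Q}$ is ergodic if and only if $\underline{T}_t$ is regularly absorbing.
   Context: $\mathcal{L}(\mathcal{X})$ is the set of real-valued functions on $\mathcal{X}$ with pointwise operations and order, real constants identified with constant functions, $\mathbb{I}_A$ the indicator of $A\subseteq\mathcal{X}$, $\mathbb{I}_x\coloneqq\mathbb{I}_{\{x\}}$. A lower transition rate operator is a map $\underline{Q}\colon\mathcal{L}(\mathcal{X})\to\mathcal{L}(\mathcal{X})$ such that for all $f,g$, $\lambda\ge0$, $\mu\in\mathbb{R}$, $x,y\in\mathcal{X}$: $\underline{Q}(\mu)=0$; $\underline{Q}(f+g)\ge\underline{Q}f+\underline{Q}g$; $\underline{Q}(\lambda f)=\lambda\underline{Q}f$; $x\ne y\Rightarrow\underline{Q}(\mathbb{I}_y)(x)\ge0$. For each $f$, $t\mapsto\underline{T}_tf$ is the unique solution on $[0,\infty)$ of $\frac{d}{dt}\underline{T}_tf=\underline{Q}\,\underline{T}_tf$ with $\underline{T}_0f=f$ (existence and uniqueness are known); $\underline{T}_t$ denotes the operator $f\mapsto\underline{T}_tf$. $\underline{Q}$ is ergodic if for all $f$, $\lim_{t\to\infty}\underline{T}_tf$ exists and is a constant function. For an operator $\underline{T}$ (here $\underline{T}=\underline{T}_t$) let $\overline{T}f\coloneqq-\underline{T}(-f)$ and let powers denote composition. $\underline{T}$ is regularly absorbing if $\mathcal{X}_{\mathrm{RA}}\coloneqq\{x\in\mathcal{X}\colon\exists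 n\in\mathbb{N},\ \min\overline{T}^n\mathbb{I}_x>0\}\neq\emptyset$ and for every $x\in\mathcal{X}\setminus\mathcal{X}_{\mathrm{RA}}$ there is $n\in\mathbb{N}$ with $\underline{T}^n\mathbb{I}_{\mathcal{X}_{\mathrm{RA}}}(x)>0$. *)

theory Defs
  imports Complex_Main
begin

text \<open>Gambles on a finite state space 'x are functions 'x \<Rightarrow> real (pointwise operations and order).\<close>

definition ind :: "'x set \<Rightarrow> 'x \<Rightarrow> real" where
  "ind A = (\<lambda>z. if z \<in> A then 1 else 0)"

definition lower_transition_rate_operator :: "(('x \<Rightarrow> real) \<Rightarrow> ('x \<Rightarrow> real)) \<Rightarrow> bool" where
  "lower_transition_rate_operator Q \<longleftrightarrow>
     (\<forall>\<mu>::real. Q (\<lambda>_. \<mu>) = (\<lambda>_. 0)) \<and>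
     (\<forall>f g x. Q (\<lambda>z. f z + g z) x \<ge> Q f x + Q g x) \<and>
     (\<forall>(l::real) f. l \<ge> 0 \<longrightarrow> Q (\<lambda>z. l * f z) = (\<lambda>x. l * Q f x)) \<and>
     (\<forall>x y. x \<noteq> y \<longrightarrow> Q (ind {y}) x \<ge> 0)"

definition is_lower_solution :: "(('x \<Rightarrow> real) \<Rightarrow> ('x \<Rightarrow> real)) \<Rightarrow> ('x \<Rightarrow> real) \<Rightarrow> (real \<Rightarrow> 'x \<Rightarrow> real) \<Rightarrow> bool" where
  "is_lower_solution Q f g \<longleftrightarrow> g 0 = f \<and>
     (\<forall>s\<ge>0. \<forall>x. ((\<lambda>r. g r x) has_real_derivative Q (g s) x) (at s within {0..}))"

definition lower_T :: "(('x \<Rightarrow> real) \<Rightarrow> ('x \<Rightarrow> real)) \<Rightarrow> real \<Rightarrow> ('x \<Rightarrow> real) \<Rightarrow> ('x \<Rightarrow> real)" where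
  "lower_T Q t f = (THE h. \<exists>g. is_lower_solution Q f g \<and> g t = h)"

definition ergodic :: "(('x \<Rightarrow> real) \<Rightarrow> ('x \<Rightarrow> real)) \<Rightarrow> bool" where
  "ergodic Q \<longleftrightarrow> (\<forall>f. \<exists>c::real. \<forall>x. ((\<lambda>t. lower_T Q t f x) \<longlongrightarrow> c) at_top)"

definition upper_op :: "(('x \<Rightarrow> real) \<Rightarrow> ('x \<Rightarrow> real)) \<Rightarrow> ('x \<Rightarrow> real) \<Rightarrow> ('x \<Rightarrow> real)" where
  "upper_op T f = (\<lambda>x. - T (\<lambda>z. - f z) x)"

definition RA_set :: "(('x::finite \<Rightarrow> real) \<Rightarrow> ('x \<Rightarrow> real)) \<Rightarrow> 'x set" where
  "RA_set T = {x. \<exists>n::nat. n \<ge> 1 \<and> Min (range ((upper_op T ^^ n) (ind {x}))) > 0}"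

definition regularly_absorbing :: "(('x::finite \<Rightarrow> real) \<Rightarrow> ('x \<Rightarrow> real)) \<Rightarrow> bool" where
  "regularly_absorbing T \<longleftrightarrow> RA_set T \<noteq> {} \<and>
     (\<forall>x. x \<notin> RA_set T \<longrightarrow> (\<exists>n::nat. n \<ge> 1 \<and> (T ^^ n) (ind (RA_set T)) x > 0))"

end

theory Submission
  imports Defs "HOL-Analysis.Analysis"
begin


context
  fixes Q :: "('x::finite \<Rightarrow> real) \<Rightarrow> ('x \<Rightarrow> real)"
  assumes Q: "lower_transition_rate_operator Q"
begin

lemma Q_const: "Q (\<lambda>_. c) = (\<lambda>_. 0)"
  using Q unfolding lower_transition_rate_operator_def by blast

lemma Q_sadd: "Q (\<lambda>z. f z + g z) x \<ge> Q f x + Q g x"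
  using Q unfolding lower_transition_rate_operator_def by blast

lemma Q_hom: "l \<ge> 0 \<Longrightarrow> Q (\<lambda>z. l * f z) = (\<lambda>x. l * Q f x)"
  using Q unfolding lower_transition_rate_operator_def by blast

lemma Q_offdiag: "x \<noteq> y \<Longrightarrow> Q (ind {y}) x \<ge> 0"
  using Q unfolding lower_transition_rate_operator_def by blast

lemma Q_cadd: "Q (\<lambda>z. f z + c) = Q f"
proof
  fix x
  have "Q (\<lambda>z. f z + c) x \<ge> Q f x + Q (\<lambda>_. c) x" by (rule Q_sadd)
  moreover have "Q (\<lambda>z. (f z + c) + (- c)) x \<ge> Q (\<lambda>z. f z + c) x + Q (\<lambda>_. -c) x" by (rule Q_sadd)
  ultimately show "Q (\<lambda>z. f z + c) x = Q f x" by (simp add: Q_const)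
qed

lemma Q_sum: "finite A \<Longrightarrow> Q (\<lambda>z. \<Sum>y\<in>A. u y z) x \<ge> (\<Sum>y\<in>A. Q (u y) x)"
proof (induction A rule: finite_induct)
  case empty
  then show ?case by (simp add: Q_const)
next
  case (insert a A)
  have "Q (\<lambda>z. \<Sum>y\<in>insert a A. u y z) x = Q (\<lambda>z. u a z + (\<Sum>y\<in>A. u y z)) x"
    using insert by simp
  also have "\<dots> \<ge> Q (u a) x + Q (\<lambda>z. \<Sum>y\<in>A. u y z) x" by (rule Q_sadd)
  finally show ?case using insert by simp
qed

lemma decomp: "(\<lambda>z. \<Sum>y\<in>UNIV. f y * ind {y} z) = (f :: 'x \<Rightarrow> real)"
proof
  fix z
  have "(\<Sum>y\<in>UNIV. f y * ind {y} z) = (\<Sum>y\<in>UNIV. if y = z then f y else 0)"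
    by (rule sum.cong) (auto simp: ind_def)
  then show "(\<Sum>y\<in>UNIV. f y * ind {y} z) = f z" by simp
qed

definition KQ :: real where
  "KQ = (\<Sum>y\<in>UNIV. \<Sum>x\<in>UNIV. \<bar>Q (ind {y}) x\<bar> + \<bar>Q (\<lambda>z. - ind {y} z) x\<bar>)"

lemma KQ_ge1: "\<bar>Q (ind {y}) x\<bar> \<le> KQ" and KQ_ge2: "\<bar>Q (\<lambda>z. - ind {y} z) x\<bar> \<le> KQ"
proof -
  have a: "\<bar>Q (ind {y}) x\<bar> + \<bar>Q (\<lambda>z. - ind {y} z) x\<bar> \<le> (\<Sum>x\<in>UNIV. \<bar>Q (ind {y}) x\<bar> + \<bar>Q (\<lambda>z. - ind {y} z) x\<bar>)"
    by (rule member_le_sum) auto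
  have b: "(\<Sum>x\<in>UNIV. \<bar>Q (ind {y}) x\<bar> + \<bar>Q (\<lambda>z. - ind {y} z) x\<bar>) \<le> KQ"
    unfolding KQ_def by (rule member_le_sum) (auto intro: sum_nonneg)
  show "\<bar>Q (ind {y}) x\<bar> \<le> KQ" "\<bar>Q (\<lambda>z. - ind {y} z) x\<bar> \<le> KQ" using a b by auto
qed

lemma KQ_nonneg: "KQ \<ge> 0"
  using KQ_ge1 abs_ge_zero order_trans by blast

lemma Q_single: "Q (\<lambda>z. c * ind {y} z) x \<ge> - KQ * \<bar>c\<bar>"
proof (cases "c \<ge> 0")
  case True
  then have "Q (\<lambda>z. c * ind {y} z) x = c * Q (ind {y}) x" using Q_hom[of c "ind {y}"] by simp
  moreover have "c * Q (ind {y}) x \<ge> - (c * KQ)"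
  proof -
    have "- KQ \<le> Q (ind {y}) x" using KQ_ge1[of y x] by (simp add: abs_le_iff)
    then have "c * (- KQ) \<le> c * Q (ind {y}) x" by (rule mult_left_mono) (use True in auto)
    then show ?thesis by simp
  qed
  ultimately show ?thesis using True by (simp add: mult.commute)
next
  case False
  have e: "(\<lambda>z. c * ind {y} z) = (\<lambda>z. (-c) * (- ind {y} z))" by simp
  have "Q (\<lambda>z. c * ind {y} z) x = (-c) * Q (\<lambda>z. - ind {y} z) x"
    unfolding e using Q_hom[of "-c" "\<lambda>z. - ind {y} z"] False by simp
  moreover have "(-c) * Q (\<lambda>z. - ind {y} z) x \<ge> - ((-c) * KQ)"
  proof -
    have "- KQ \<le> Q (\<lambda>z. - ind {y} z) x" using KQ_ge2[of y x] by (simp add: abs_le_iff)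
    then have "(-c) * (- KQ) \<le> (-c) * Q (\<lambda>z. - ind {y} z) x" by (rule mult_left_mono) (use False in auto)
    then show ?thesis by simp
  qed
  ultimately show ?thesis using False by (simp add: mult.commute)
qed

lemma Q_lower: "Q h x \<ge> - KQ * (\<Sum>y\<in>UNIV. \<bar>h y\<bar>)"
proof -
  have "Q h x = Q (\<lambda>z. \<Sum>y\<in>UNIV. h y * ind {y} z) x" by (simp add: decomp)
  also have "\<dots> \<ge> (\<Sum>y\<in>UNIV. Q (\<lambda>z. h y * ind {y} z) x)" by (rule Q_sum) simp
  finally have "Q h x \<ge> (\<Sum>y\<in>UNIV. Q (\<lambda>z. h y * ind {y} z) x)" .
  moreover have "(\<Sum>y\<in>UNIV. Q (\<lambda>z. h y * ind {y} z) x) \<ge> (\<Sum>y\<in>UNIV. - KQ * \<bar>h y\<bar>)"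
    by (rule sum_mono) (rule Q_single)
  ultimately show ?thesis by (simp add: sum_distrib_left)
qed

lemma Q_lip: "\<bar>Q f x - Q g x\<bar> \<le> KQ * (\<Sum>y\<in>UNIV. \<bar>f y - g y\<bar>)"
proof -
  have 1: "Q f x \<ge> Q g x + Q (\<lambda>z. f z - g z) x"
    using Q_sadd[where f=g and g="\<lambda>z. f z - g z" and x=x] by simp
  have 2: "Q g x \<ge> Q f x + Q (\<lambda>z. g z - f z) x"
    using Q_sadd[where f=f and g="\<lambda>z. g z - f z" and x=x] by simp
  have 3: "Q (\<lambda>z. f z - g z) x \<ge> - KQ * (\<Sum>y\<in>UNIV. \<bar>f y - g y\<bar>)" by (rule Q_lower)
  have 4: "Q (\<lambda>z. g z - f z) x \<ge> - KQ * (\<Sum>y\<in>UNIV. \<bar>f y - g y\<bar>)"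
    using Q_lower[of "\<lambda>z. g z - f z" x] by (simp add: abs_minus_commute)
  show ?thesis using 1 2 3 4 by linarith
qed

lemma Q_pos: assumes "\<And>z. v z \<ge> 0" shows "Q v x \<ge> - KQ * v x"
proof -
  have "Q v x = Q (\<lambda>z. \<Sum>y\<in>UNIV. v y * ind {y} z) x" by (simp add: decomp)
  also have "\<dots> \<ge> (\<Sum>y\<in>UNIV. Q (\<lambda>z. v y * ind {y} z) x)" by (rule Q_sum) simp
  finally have a: "Q v x \<ge> (\<Sum>y\<in>UNIV. Q (\<lambda>z. v y * ind {y} z) x)" .
  have b: "(\<Sum>y\<in>UNIV. Q (\<lambda>z. v y * ind {y} z) x) \<ge> (\<Sum>y\<in>UNIV. if y = x then - KQ * v x else 0)"
  proof (rule sum_mono)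
    fix y
    show "(if y = x then - KQ * v x else 0) \<le> Q (\<lambda>z. v y * ind {y} z) x"
    proof (cases "y = x")
      case True
      then show ?thesis using Q_single[of "v x" x x] assms[of x] by simp
    next
      case False
      then have "Q (\<lambda>z. v y * ind {y} z) x = v y * Q (ind {y}) x"
        using Q_hom[of "v y" "ind {y}"] assms[of y] by simp
      moreover have "v y * Q (ind {y}) x \<ge> 0" using Q_offdiag[of x y] False assms[of y] by simp
      ultimately show ?thesis using False by simp
    qed
  qed
  show ?thesis using a b by simp
qed

end


lemma int_pow: assumes "0 \<le> s" shows "((\<lambda>r::real. r^k) has_integral s^Suc k / Suc k) {0..s}"
proof -
  have "((\<lambda>r. r^k) has_integral ((\<lambda>r::real. r^Suc k / Suc k) s - (\<lambda>r. r^Suc k / Suc k) 0)) {0..s}"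
  proof (rule fundamental_theorem_of_calculus)
    fix x :: real assume "x \<in> {0..s}"
    have "((\<lambda>r::real. r^Suc k / Suc k) has_real_derivative x^k) (at x within {0..s})"
      apply (auto intro!: derivative_eq_intros)
      apply (cases k)
       apply (auto simp: field_simps)
      done
    then show "((\<lambda>r::real. r^Suc k / Suc k) has_vector_derivative x^k) (at x within {0..s})"
      by (simp add: has_real_derivative_iff_has_vector_derivative)
  qed (use assms in auto)
  then show ?thesis by simp
qed

lemma int_le_pow:
  assumes s: "0 \<le> s" and e: "e integrable_on {0..s}" and le: "\<And>r. r \<in> {0..s} \<Longrightarrow> e r \<le> C * r^k"
  shows "integral {0..s} e \<le> C * (s^Suc k / Suc k)"
proof -
  have h: "((\<lambda>r. C * r^k) has_integral C * (s^Suc k / Suc k)) {0..s}"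
    by (rule has_integral_mult_right) (rule int_pow[OF s])
  have "integral {0..s} e \<le> integral {0..s} (\<lambda>r. C * r^k)"
    by (rule integral_le[OF e]) (use h le in auto)
  also have "\<dots> = C * (s^Suc k / Suc k)" using h by (rule integral_unique)
  finally show ?thesis .
qed

lemma integral_nonneg_real:
  assumes "f integrable_on {a..b}" "\<And>r. r \<in> {a..b} \<Longrightarrow> 0 \<le> (f r :: real)"
  shows "0 \<le> integral {a..b} f"
proof -
  have "integral {a..b} (\<lambda>_. 0::real) \<le> integral {a..b} f"
    by (rule integral_le) (use assms in \<open>auto intro: integrable_0\<close>)
  then show ?thesis by simp
qed

lemma gronwall0:
  fixes d :: "real \<Rightarrow> real"
  assumes cont: "continuous_on {0..S} d" and nn: "\<And>s. s \<in> {0..S} \<Longrightarrow> d s \<ge> 0" and M: "M \<ge> 0"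
    and ineq: "\<And>s. s \<in> {0..S} \<Longrightarrow> d s \<le> M * integral {0..s} d"
  shows "\<And>s. s \<in> {0..S} \<Longrightarrow> d s = 0"
proof -
  have "compact (d ` {0..S})" by (rule compact_continuous_image[OF cont]) simp
  then have "bounded (d ` {0..S})" by (rule compact_imp_bounded)
  then obtain B where "\<forall>x\<in>d ` {0..S}. norm x \<le> B"
    unfolding bounded_iff by blast
  then have B: "\<And>s. s \<in> {0..S} \<Longrightarrow> norm (d s) \<le> B" by blast
  have bnd: "\<And>s. s \<in> {0..S} \<Longrightarrow> d s \<le> B * ((M * s)^k / fact k)" for k
  proof (induction k)
    case 0
    then show ?case using B[of s] by simp
  next
    case (Suc k)
    fix s assume s: "s \<in> {0..S}"
    have int: "d integrable_on {0..s}"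
      by (rule integrable_continuous_interval) (rule continuous_on_subset[OF cont], use s in auto)
    have "integral {0..s} d \<le> (B * M^k / fact k) * (s^Suc k / Suc k)"
    proof (rule int_le_pow)
      fix r assume r: "r \<in> {0..s}"
      then have "d r \<le> B * ((M * r)^k / fact k)" using Suc.IH[of r] s by auto
      then show "d r \<le> B * M ^ k / fact k * r ^ k" by (simp add: power_mult_distrib)
    qed (use s int in auto)
    then have "M * integral {0..s} d \<le> M * ((B * M^k / fact k) * (s^Suc k / Suc k))"
      using M by (rule mult_left_mono)
    also have "\<dots> = B * ((M * s)^Suc k / fact (Suc k))"
      by (simp add: power_mult_distrib field_simps)
    finally show "d s \<le> B * ((M * s)^Suc k / fact (Suc k))" using ineq[OF s] by linarith
  qed
  fix s assume s: "s \<in> {0..S}"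
  have "(\<lambda>k. inverse (fact k) * (M * s)^k) \<longlonglongrightarrow> 0"
    by (rule summable_LIMSEQ_zero) (rule summable_exp)
  then have "(\<lambda>k. B * (inverse (fact k) * (M * s)^k)) \<longlonglongrightarrow> B * 0"
    by (intro tendsto_intros)
  then have "(\<lambda>k. B * ((M * s)^k / fact k)) \<longlonglongrightarrow> 0"
    by (simp add: field_simps)
  then have "d s \<le> 0"
    by (rule LIMSEQ_le_const) (use bnd[OF s] in \<open>auto intro: exI[of _ 0]\<close>)
  then show "d s = 0" using nn[OF s] by simp
qed

lemma deriv_within_ext:
  assumes "(F has_real_derivative D) (at s within {0..b})" "0 \<le> s" "s < b"
  shows "(F has_real_derivative D) (at s within {0..})"
proof -
  have "at s within {0..b} = at s within {0..}"
    by (rule at_within_nhd[of s "{s-1<..<b}"]) (use assms in auto)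
  then show ?thesis using assms(1) by simp
qed

lemma deriv_integral:
  assumes "\<And>S. continuous_on {0..S} h" "0 \<le> s"
  shows "((\<lambda>u. integral {0..u} h) has_real_derivative h s) (at s within {0..})"
proof -
  have "((\<lambda>u. integral {0..u} h) has_vector_derivative h s) (at s within {0..s+1})"
    by (rule integral_has_vector_derivative) (use assms in auto)
  then show ?thesis
    by (intro deriv_within_ext[of _ _ _ "s+1"]) (use assms in \<open>auto simp: has_real_derivative_iff_has_vector_derivative\<close>)
qed

lemma cont_from_deriv:
  assumes "\<And>s. s \<ge> 0 \<Longrightarrow> (F has_real_derivative D s) (at s within {0..})"
  shows "continuous_on {0..S} F"
  unfolding continuous_on_eq_continuous_within
proof
  fix s assume s: "s \<in> {0..S}"
  have "(F has_vector_derivative D s) (at s within {0..})"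
    using assms[of s] s by (simp add: has_real_derivative_iff_has_vector_derivative)
  then have "continuous (at s within {0..}) F" by (rule has_vector_derivative_continuous)
  then show "continuous (at s within {0..S}) F" by (rule continuous_within_subset) auto
qed

lemma ftc0:
  assumes "\<And>r. r \<ge> 0 \<Longrightarrow> (F has_real_derivative D r) (at r within {0..})" "0 \<le> s"
  shows "(D has_integral (F s - F 0)) {0..s}"
proof (rule fundamental_theorem_of_calculus)
  fix x assume x: "x \<in> {0..s}"
  have "(F has_real_derivative D x) (at x within {0..s})"
    by (rule DERIV_subset[OF assms(1)]) (use x in auto)
  then show "(F has_vector_derivative D x) (at x within {0..s})"
    by (simp add: has_real_derivative_iff_has_vector_derivative)
qed (use assms in auto)



context
  fixes Q :: "('x::finite \<Rightarrow> real) \<Rightarrow> ('x \<Rightarrow> real)"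
  assumes Q: "lower_transition_rate_operator Q"
begin

lemma compare:
  fixes \<phi> \<phi>' :: "real \<Rightarrow> 'x \<Rightarrow> real"
  assumes d: "\<And>s x. s \<ge> 0 \<Longrightarrow> ((\<lambda>r. \<phi> r x) has_real_derivative \<phi>' s x) (at s within {0..})"
    and ge: "\<And>s x. s \<ge> 0 \<Longrightarrow> \<phi>' s x \<ge> Q (\<phi> s) x" and init: "\<And>x. \<phi> 0 x \<ge> 0" and s: "s \<ge> 0"
  shows "\<phi> s x \<ge> 0"
proof -
  define K where "K = KQ Q"
  have K0: "K \<ge> 0" unfolding K_def by (rule KQ_nonneg[OF Q])
  define \<psi> where "\<psi> r y = exp (K * r) * \<phi> r y" for r y
  define \<psi>' where "\<psi>' r y = exp (K * r) * K * \<phi> r y + \<phi>' r y * exp (K * r)" for r y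
  have d\<psi>: "((\<lambda>r. \<psi> r y) has_real_derivative \<psi>' r y) (at r within {0..})" if r: "r \<ge> 0" for r y
    unfolding \<psi>_def \<psi>'_def
    by (rule derivative_eq_intros d[OF r] refl | simp)+
  define dn where "dn r = (\<Sum>y\<in>UNIV. max 0 (- \<psi> r y))" for r
  have key: "\<psi>' r y \<ge> - (2 * K) * dn r" if r: "r \<ge> 0" for r y
  proof -
    define v where "v = \<phi> r"
    define vp where "vp z = max 0 (v z)" for z
    define vm where "vm z = max 0 (- v z)" for z
    have vsplit: "v = (\<lambda>z. vp z + (- vm z))" unfolding vp_def vm_def by auto
    have "Q v y \<ge> Q vp y + Q (\<lambda>z. - vm z) y"
      using Q_sadd[OF Q, where f=vp and g="\<lambda>z. - vm z" and x=y] vsplit by simp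
    moreover have "Q vp y \<ge> - K * vp y" unfolding K_def by (rule Q_pos[OF Q]) (simp add: vp_def)
    moreover have "Q (\<lambda>z. - vm z) y \<ge> - K * (\<Sum>z\<in>UNIV. vm z)"
      using Q_lower[OF Q, of "\<lambda>z. - vm z" y] unfolding K_def by (simp add: vm_def)
    moreover have "vm y \<le> (\<Sum>z\<in>UNIV. vm z)" by (rule member_le_sum) (auto simp: vm_def)
    moreover have "K * vm y \<le> K * (\<Sum>z\<in>UNIV. vm z)" using calculation(4) K0 by (rule mult_left_mono)
    moreover have "v y = vp y - vm y" unfolding vp_def vm_def by auto
    moreover have "\<phi>' r y \<ge> Q v y" using ge[OF r] unfolding v_def by simp
    moreover have "K * v y = K * vp y - K * vm y" using calculation(6) by (simp add: right_diff_distrib)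
    ultimately have A0: "K * v y + \<phi>' r y \<ge> - 2 * (K * (\<Sum>z\<in>UNIV. vm z))"
      by linarith
    then have A: "K * \<phi> r y + \<phi>' r y \<ge> - (2 * K) * (\<Sum>z\<in>UNIV. vm z)"
      unfolding v_def by (simp add: algebra_simps)
    have E: "exp (K * r) * (\<Sum>z\<in>UNIV. vm z) = dn r"
      unfolding dn_def sum_distrib_left vm_def v_def \<psi>_def
    proof (rule sum.cong[OF refl])
      fix z
      show "exp (K * r) * max 0 (- \<phi> r z) = max 0 (- (exp (K * r) * \<phi> r z))"
        by (cases "\<phi> r z \<ge> 0") (auto simp: max_def mult_le_0_iff zero_le_mult_iff)
    qed
    have "\<psi>' r y = exp (K * r) * (K * \<phi> r y + \<phi>' r y)" unfolding \<psi>'_def by (simp add: algebra_simps)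
    also have "\<dots> \<ge> exp (K * r) * (- (2 * K) * (\<Sum>z\<in>UNIV. vm z))"
      using A by (intro mult_left_mono) auto
    also have "exp (K * r) * (- (2 * K) * (\<Sum>z\<in>UNIV. vm z)) = - (2 * K) * dn r"
      unfolding E[symmetric] by (simp add: algebra_simps)
    finally show ?thesis .
  qed
  have cont\<psi>: "continuous_on {0..S} (\<lambda>r. \<psi> r y)" for S y
    by (rule cont_from_deriv) (rule d\<psi>)
  have contdn: "continuous_on {0..S} dn" for S
    unfolding dn_def by (intro continuous_intros cont\<psi>)
  have dnn: "dn r \<ge> 0" for r unfolding dn_def by (intro sum_nonneg) auto
  have ineq: "dn r \<le> (2 * K * real CARD('x)) * integral {0..r} dn" if r: "r \<in> {0..s}" for r
  proof -
    have intdn: "dn integrable_on {0..r}"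
      by (rule integrable_continuous_interval) (rule contdn)
    have idn: "integral {0..r} dn \<ge> 0" by (rule integral_nonneg_real[OF intdn]) (rule dnn)
    have each: "max 0 (- \<psi> r y) \<le> 2 * K * integral {0..r} dn" for y
    proof -
      have hi: "((\<lambda>u. \<psi>' u y) has_integral (\<psi> r y - \<psi> 0 y)) {0..r}"
        by (rule ftc0) (use d\<psi> r in auto)
      have im: "(\<lambda>u. - (2 * K) * dn u) integrable_on {0..r}"
        using has_integral_mult_right[OF integrable_integral[OF intdn], of "- (2 * K)"] by blast
      have "integral {0..r} (\<lambda>u. - (2 * K) * dn u) \<le> integral {0..r} (\<lambda>u. \<psi>' u y)"
        by (rule integral_le[OF im]) (use hi key in auto)
      moreover have "integral {0..r} (\<lambda>u. - (2 * K) * dn u) = - (2 * K) * integral {0..r} dn"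
        using intdn by (simp add: integral_mult_right)
      moreover have "integral {0..r} (\<lambda>u. \<psi>' u y) = \<psi> r y - \<psi> 0 y" using hi by (rule integral_unique)
      moreover have "\<psi> 0 y \<ge> 0" unfolding \<psi>_def using init by simp
      ultimately have "- \<psi> r y \<le> 2 * K * integral {0..r} dn" by linarith
      moreover have "0 \<le> 2 * K * integral {0..r} dn" using K0 idn by simp
      ultimately show ?thesis by simp
    qed
    have "dn r \<le> (\<Sum>y\<in>(UNIV::'x set). 2 * K * integral {0..r} dn)"
    proof -
      have "dn r = (\<Sum>y\<in>UNIV. max 0 (- \<psi> r y))" by (simp add: dn_def)
      also have "\<dots> \<le> (\<Sum>y\<in>(UNIV::'x set). 2 * K * integral {0..r} dn)"
        by (rule sum_mono) (rule each)
      finally show ?thesis .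
    qed
    then show ?thesis by (simp add: algebra_simps)
  qed
  have "dn s = 0"
    by (rule gronwall0[where S=s and M="2 * K * real CARD('x)", OF contdn]) (use dnn K0 ineq s in auto)
  then have "max 0 (- \<psi> s x) = 0"
    unfolding dn_def using sum_nonneg_eq_0_iff[of UNIV "\<lambda>y. max 0 (- \<psi> s y)"] by auto
  then have "\<psi> s x \<ge> 0" by linarith
  then show ?thesis unfolding \<psi>_def by (simp add: zero_le_mult_iff)
qed

end


primrec pic :: "(('x \<Rightarrow> real) \<Rightarrow> ('x \<Rightarrow> real)) \<Rightarrow> ('x \<Rightarrow> real) \<Rightarrow> nat \<Rightarrow> real \<Rightarrow> 'x \<Rightarrow> real" where
  "pic Q f 0 = (\<lambda>s. f)"
| "pic Q f (Suc k) = (\<lambda>s x. f x + integral {0..s} (\<lambda>r. Q (pic Q f k r) x))"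

declare pic.simps(2)[simp del]

lemma pic_Suc[simp]: "pic Q f (Suc k) s x = f x + integral {0..s} (\<lambda>r. Q (pic Q f k r) x)"
  by (simp add: pic.simps(2))

definition gsol :: "(('x \<Rightarrow> real) \<Rightarrow> ('x \<Rightarrow> real)) \<Rightarrow> ('x \<Rightarrow> real) \<Rightarrow> real \<Rightarrow> 'x \<Rightarrow> real" where
  "gsol Q f s y = f y + (\<Sum>j. pic Q f (Suc j) s y - pic Q f j s y)"

context
  fixes Q :: "('x::finite \<Rightarrow> real) \<Rightarrow> ('x \<Rightarrow> real)"
  assumes Q: "lower_transition_rate_operator Q"
begin

lemma cont_Q:
  assumes "\<And>y. continuous_on {0..S} (\<lambda>r. g r y)"
  shows "continuous_on {0..S} (\<lambda>r. Q (g r) x)"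
  unfolding continuous_on_def
proof
  fix r0 assume r0: "r0 \<in> {0..S}"
  have t: "((\<lambda>r. g r y) \<longlongrightarrow> g r0 y) (at r0 within {0..S})" for y
    using assms[of y] r0 unfolding continuous_on_def by blast
  have "((\<lambda>r. KQ Q * (\<Sum>y\<in>UNIV. \<bar>g r y - g r0 y\<bar>)) \<longlongrightarrow> KQ Q * (\<Sum>y\<in>UNIV. \<bar>g r0 y - g r0 y\<bar>)) (at r0 within {0..S})"
    by (intro tendsto_intros t)
  then have z: "((\<lambda>r. KQ Q * (\<Sum>y\<in>UNIV. \<bar>g r y - g r0 y\<bar>)) \<longlongrightarrow> 0) (at r0 within {0..S})" by simp
  have "((\<lambda>r. Q (g r) x - Q (g r0) x) \<longlongrightarrow> 0) (at r0 within {0..S})"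
    by (rule Lim_null_comparison[OF _ z]) (auto intro!: always_eventually Q_lip[OF Q])
  then show "((\<lambda>r. Q (g r) x) \<longlongrightarrow> Q (g r0) x) (at r0 within {0..S})"
    by (rule LIM_zero_cancel)
qed

lemma pic_cont: "continuous_on {0..S} (\<lambda>s. pic Q f k s y)"
proof (induction k arbitrary: S y)
  case 0
  then show ?case by simp
next
  case (Suc k)
  have h: "continuous_on {0..S'} (\<lambda>r. Q (pic Q f k r) y)" for S' by (rule cont_Q) (rule Suc.IH)
  have "continuous_on {0..S} (\<lambda>s. integral {0..s} (\<lambda>r. Q (pic Q f k r) y))"
    by (rule cont_from_deriv) (rule deriv_integral[OF h])
  then show ?case by (simp add: continuous_intros)
qed

lemma pic_int: "(\<lambda>r. Q (pic Q f k r) y) integrable_on {0..s}"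
  by (rule integrable_continuous_interval) (rule cont_Q, rule pic_cont)

definition C0 :: "('x \<Rightarrow> real) \<Rightarrow> real" where "C0 f = (\<Sum>y\<in>UNIV. \<bar>Q f y\<bar>)"
definition LL :: real where "LL = KQ Q * real CARD('x)"

lemma LL_nonneg: "LL \<ge> 0" unfolding LL_def using KQ_nonneg[OF Q] by simp

lemma pic_diff_bound:
  assumes s: "s \<ge> 0"
  shows "(\<Sum>y\<in>UNIV. \<bar>pic Q f (Suc k) s y - pic Q f k s y\<bar>) \<le> C0 f * LL^k * s^Suc k / fact (Suc k)"
  using s
proof (induction k arbitrary: s)
  case 0
  then show ?case by (simp add: C0_def sum_distrib_left sum_distrib_right abs_mult mult.commute)
next
  case (Suc k)
  have each: "\<bar>pic Q f (Suc (Suc k)) s y - pic Q f (Suc k) s y\<bar>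
      \<le> KQ Q * (C0 f * LL^k / fact (Suc k)) * (s^Suc (Suc k) / Suc (Suc k))" for y
  proof -
    have "pic Q f (Suc (Suc k)) s y - pic Q f (Suc k) s y
        = integral {0..s} (\<lambda>r. Q (pic Q f (Suc k) r) y - Q (pic Q f k r) y)"
      by (simp add: integral_diff pic_int)
    also have "\<bar>\<dots>\<bar> \<le> integral {0..s} (\<lambda>r. KQ Q * (\<Sum>z\<in>UNIV. \<bar>pic Q f (Suc k) r z - pic Q f k r z\<bar>))"
    proof -
      have ct: "continuous_on {0..s} (\<lambda>r. KQ Q * (\<Sum>z\<in>UNIV. \<bar>pic Q f (Suc k) r z - pic Q f k r z\<bar>))"
        by (intro continuous_intros pic_cont)
      have "norm (integral {0..s} (\<lambda>r. Q (pic Q f (Suc k) r) y - Q (pic Q f k r) y))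
          \<le> integral {0..s} (\<lambda>r. KQ Q * (\<Sum>z\<in>UNIV. \<bar>pic Q f (Suc k) r z - pic Q f k r z\<bar>))"
        by (rule integral_norm_bound_integral[OF integrable_diff[OF pic_int[of f "Suc k" y s] pic_int[of f k y s]] integrable_continuous_interval[OF ct]])
          (simp only: real_norm_def, rule Q_lip[OF Q])
      then show ?thesis by (simp only: real_norm_def)
    qed
    also have "\<dots> \<le> (KQ Q * (C0 f * LL^k / fact (Suc k))) * (s^Suc (Suc k) / Suc (Suc k))"
    proof (rule int_le_pow)
      have ct: "continuous_on {0..s} (\<lambda>r. KQ Q * (\<Sum>z\<in>UNIV. \<bar>pic Q f (Suc k) r z - pic Q f k r z\<bar>))"
        by (intro continuous_intros pic_cont)
      then show "(\<lambda>r. KQ Q * (\<Sum>z\<in>UNIV. \<bar>pic Q f (Suc k) r z - pic Q f k r z\<bar>)) integrable_on {0..s}"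
        by (rule integrable_continuous_interval)
      fix r assume r: "r \<in> {0..s}"
      have "(\<Sum>z\<in>UNIV. \<bar>pic Q f (Suc k) r z - pic Q f k r z\<bar>) \<le> C0 f * LL^k * r^Suc k / fact (Suc k)"
        using Suc.IH[of r] r by auto
      then have "KQ Q * (\<Sum>z\<in>UNIV. \<bar>pic Q f (Suc k) r z - pic Q f k r z\<bar>) \<le> KQ Q * (C0 f * LL^k * r^Suc k / fact (Suc k))"
        by (rule mult_left_mono) (rule KQ_nonneg[OF Q])
      then show "KQ Q * (\<Sum>z\<in>UNIV. \<bar>pic Q f (Suc k) r z - pic Q f k r z\<bar>) \<le> KQ Q * (C0 f * LL ^ k / fact (Suc k)) * r ^ Suc k"
        by (simp add: field_simps)
    qed (use Suc.prems in auto)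
    finally show ?thesis .
  qed
  have "(\<Sum>y\<in>UNIV. \<bar>pic Q f (Suc (Suc k)) s y - pic Q f (Suc k) s y\<bar>)
     \<le> (\<Sum>y\<in>(UNIV::'x set). KQ Q * (C0 f * LL^k / fact (Suc k)) * (s^Suc (Suc k) / Suc (Suc k)))"
    by (rule sum_mono) (rule each)
  also have "\<dots> = C0 f * LL ^ Suc k * s ^ Suc (Suc k) / fact (Suc (Suc k))"
    by (simp add: LL_def field_simps)
  finally show ?case .
qed

end


context
  fixes Q :: "('x::finite \<Rightarrow> real) \<Rightarrow> ('x \<Rightarrow> real)"
  assumes Q: "lower_transition_rate_operator Q"
begin

lemma C0_nonneg: "C0 Q f \<ge> 0" unfolding C0_def[OF Q] by (intro sum_nonneg) auto

lemma pic_term_bound: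
  assumes s: "s \<in> {0..S}"
  shows "norm (pic Q f (Suc j) s y - pic Q f j s y) \<le> C0 Q f * S * ((LL Q * S)^j / fact j)"
proof -
  have LL0: "LL Q \<ge> 0" by (rule LL_nonneg[OF Q])
  have C00: "C0 Q f \<ge> 0" by (rule C0_nonneg)
  have "norm (pic Q f (Suc j) s y - pic Q f j s y) \<le> (\<Sum>y\<in>UNIV. \<bar>pic Q f (Suc j) s y - pic Q f j s y\<bar>)"
    by (simp only: real_norm_def) (rule member_le_sum, auto)
  also have "\<dots> \<le> C0 Q f * LL Q^j * s^Suc j / fact (Suc j)"
    by (rule pic_diff_bound[OF Q]) (use s in auto)
  also have "\<dots> \<le> C0 Q f * LL Q^j * S^Suc j / fact (Suc j)"
  proof -
    have "s^Suc j \<le> S^Suc j" by (rule power_mono) (use s in auto)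
    then have "C0 Q f * LL Q^j * s^Suc j \<le> C0 Q f * LL Q^j * S^Suc j"
      by (intro mult_left_mono) (use LL0 C00 in auto)
    then show ?thesis by (intro divide_right_mono) auto
  qed
  also have "\<dots> \<le> C0 Q f * LL Q^j * S^Suc j / fact j"
    by (rule divide_left_mono) (use LL0 C00 s in \<open>auto intro!: fact_mono\<close>)
  also have "\<dots> = C0 Q f * S * ((LL Q * S)^j / fact j)"
    by (simp add: power_mult_distrib)
  finally show ?thesis .
qed

lemma summ_bound: "summable (\<lambda>j. C0 Q f * S * ((LL Q * S)^j / fact j))"
proof -
  have "summable (\<lambda>j. C0 Q f * S * (inverse (fact j) * (LL Q * S)^j))"
    by (intro summable_mult summable_exp)
  then show ?thesis by (simp add: field_simps)
qed

lemma unif: "uniform_limit {0..S} (\<lambda>n s. pic Q f n s y) (\<lambda>s. gsol Q f s y) sequentially"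
proof -
  have W: "uniform_limit {0..S} (\<lambda>n s. \<Sum>i<n. pic Q f (Suc i) s y - pic Q f i s y)
      (\<lambda>s. suminf (\<lambda>i. pic Q f (Suc i) s y - pic Q f i s y)) sequentially"
    by (rule Weierstrass_m_test[OF pic_term_bound summ_bound])
  show ?thesis
    unfolding uniform_limit_iff
  proof (intro allI impI)
    fix e :: real assume e: "e > 0"
    show "\<forall>\<^sub>F n in sequentially. \<forall>s\<in>{0..S}. dist (pic Q f n s y) (gsol Q f s y) < e"
      using uniform_limitD[OF W e]
    proof (rule eventually_mono)
      fix n assume h: "\<forall>s\<in>{0..S}. dist (\<Sum>i<n. pic Q f (Suc i) s y - pic Q f i s y)
          (\<Sum>i. pic Q f (Suc i) s y - pic Q f i s y) < e"
      show "\<forall>s\<in>{0..S}. dist (pic Q f n s y) (gsol Q f s y) < e"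
      proof
        fix s assume s: "s \<in> {0..S}"
        have t: "(\<Sum>i<n. pic Q f (Suc i) s y - pic Q f i s y) = pic Q f n s y - f y"
          by (subst sum_lessThan_telescope[where f="\<lambda>i. pic Q f i s y"]) simp
        have "dist (pic Q f n s y) (gsol Q f s y) = dist (\<Sum>i<n. pic Q f (Suc i) s y - pic Q f i s y)
          (\<Sum>i. pic Q f (Suc i) s y - pic Q f i s y)"
          unfolding t gsol_def dist_real_def by simp
        then show "dist (pic Q f n s y) (gsol Q f s y) < e" using h s by simp
      qed
    qed
  qed
qed

lemma gsol_cont: "continuous_on {0..S} (\<lambda>s. gsol Q f s y)"
  by (rule uniform_limit_theorem[OF _ unif]) (auto intro!: always_eventually pic_cont[OF Q])

lemma unifQ: "uniform_limit {0..S} (\<lambda>n r. Q (pic Q f n r) y) (\<lambda>r. Q (gsol Q f r) y) sequentially"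
proof (rule uniform_limitI)
  fix e :: real assume e: "e > 0"
  define c where "c = KQ Q * real CARD('x)"
  have c0: "c \<ge> 0" unfolding c_def using KQ_nonneg[OF Q] by simp
  define e' where "e' = e / (c + 1)"
  have e': "e' > 0" unfolding e'_def using e c0 by simp
  have ce: "c * e' < e" unfolding e'_def using e c0 by (simp add: field_simps)
  have "\<forall>\<^sub>F n in sequentially. \<forall>z. \<forall>r\<in>{0..S}. dist (pic Q f n r z) (gsol Q f r z) < e'"
    by (rule eventually_all_finite) (rule uniform_limitD[OF unif e'])
  then show "\<forall>\<^sub>F n in sequentially. \<forall>r\<in>{0..S}. dist (Q (pic Q f n r) y) (Q (gsol Q f r) y) < e"
  proof (rule eventually_mono)
    fix n assume h: "\<forall>z. \<forall>r\<in>{0..S}. dist (pic Q f n r z) (gsol Q f r z) < e'"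
    show "\<forall>r\<in>{0..S}. dist (Q (pic Q f n r) y) (Q (gsol Q f r) y) < e"
    proof
      fix r assume r: "r \<in> {0..S}"
      have "(\<Sum>z\<in>UNIV. \<bar>pic Q f n r z - gsol Q f r z\<bar>) \<le> of_nat (card (UNIV::'x set)) * e'"
        by (rule sum_bounded_above) (use h r in \<open>auto simp: dist_real_def less_imp_le\<close>)
      then have "KQ Q * (\<Sum>z\<in>UNIV. \<bar>pic Q f n r z - gsol Q f r z\<bar>) \<le> KQ Q * (of_nat (card (UNIV::'x set)) * e')"
        by (rule mult_left_mono) (rule KQ_nonneg[OF Q])
      then have "dist (Q (pic Q f n r) y) (Q (gsol Q f r) y) \<le> c * e'"
        unfolding dist_real_def c_def using Q_lip[OF Q, of "pic Q f n r" y "gsol Q f r"] by (simp add: mult.assoc)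
      then show "dist (Q (pic Q f n r) y) (Q (gsol Q f r) y) < e" using ce by simp
    qed
  qed
qed

lemma gsol_eq:
  assumes s: "s \<ge> 0"
  shows "gsol Q f s y = f y + integral {0..s} (\<lambda>r. Q (gsol Q f r) y)"
proof -
  obtain I J where I: "\<And>n. ((\<lambda>r. Q (pic Q f n r) y) has_integral I n) {0..s}"
    and J: "((\<lambda>r. Q (gsol Q f r) y) has_integral J) {0..s}" and IJ: "I \<longlonglongrightarrow> J"
    by (rule uniform_limit_integral[OF unifQ]) (auto intro: cont_Q[OF Q] pic_cont[OF Q])
  have "(\<lambda>n. pic Q f n s y) \<longlonglongrightarrow> gsol Q f s y"
    using tendsto_uniform_limitI[OF unif[where S=s and f=f and y=y], of s] s by simp
  then have "(\<lambda>n. pic Q f (Suc n) s y) \<longlonglongrightarrow> gsol Q f s y" by (rule LIMSEQ_Suc)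
  moreover have "(\<lambda>n. pic Q f (Suc n) s y) = (\<lambda>n. f y + I n)"
    using I by (auto simp: integral_unique)
  moreover have "(\<lambda>n. f y + I n) \<longlonglongrightarrow> f y + J" by (intro tendsto_intros IJ)
  ultimately have "gsol Q f s y = f y + J" using LIMSEQ_unique by metis
  then show ?thesis using J by (simp add: integral_unique)
qed

lemma gsol_sol: "is_lower_solution Q f (gsol Q f)"
  unfolding is_lower_solution_def
proof (intro conjI allI impI)
  show "gsol Q f 0 = f" using gsol_eq[of 0] by (auto simp: fun_eq_iff)
  fix s :: real and x assume s: "0 \<le> s"
  have "((\<lambda>u. f x + integral {0..u} (\<lambda>r. Q (gsol Q f r) x)) has_real_derivative Q (gsol Q f s) x) (at s within {0..})"
    using deriv_integral[OF cont_Q[OF Q gsol_cont] s] by (auto intro!: derivative_eq_intros)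
  then show "((\<lambda>r. gsol Q f r x) has_real_derivative Q (gsol Q f s) x) (at s within {0..})"
    by (rule has_field_derivative_transform_within[where d=1]) (use s gsol_eq in auto)
qed

end


definition lop :: "(('x \<Rightarrow> real) \<Rightarrow> ('x \<Rightarrow> real)) \<Rightarrow> bool" where
  "lop T \<longleftrightarrow> (\<forall>f g. (\<forall>x. f x \<le> g x) \<longrightarrow> (\<forall>x. T f x \<le> T g x)) \<and>
     (\<forall>f c. T (\<lambda>z. f z + c) = (\<lambda>x. T f x + c)) \<and>
     (\<forall>f g x. T f x + T g x \<le> T (\<lambda>z. f z + g z) x) \<and>
     (\<forall>l f. l \<ge> 0 \<longrightarrow> T (\<lambda>z. l * f z) = (\<lambda>x. l * T f x))"

context
  fixes Q :: "('x::finite \<Rightarrow> real) \<Rightarrow> ('x \<Rightarrow> real)"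
  assumes Q: "lower_transition_rate_operator Q"
begin

lemma sol_sub:
  assumes u: "is_lower_solution Q f u"
    and wd: "\<And>s x. s \<ge> 0 \<Longrightarrow> ((\<lambda>r. w r x) has_real_derivative w' s x) (at s within {0..})"
    and wle: "\<And>s x. s \<ge> 0 \<Longrightarrow> w' s x \<le> Q (w s) x"
    and w0: "\<And>x. w 0 x \<le> f x" and s: "s \<ge> 0"
  shows "w s x \<le> u s x"
proof -
  have "0 \<le> (\<lambda>r y. u r y - w r y) s x"
  proof (rule compare[OF Q, where \<phi>="\<lambda>r y. u r y - w r y" and \<phi>'="\<lambda>r y. Q (u r) y - w' r y"])
    fix s :: real and x assume s: "s \<ge> 0"
    show "((\<lambda>r. u r x - w r x) has_real_derivative Q (u s) x - w' s x) (at s within {0..})"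
      using u s unfolding is_lower_solution_def by (auto intro!: derivative_eq_intros wd)
    have "Q (u s) x \<ge> Q (w s) x + Q (\<lambda>z. u s z - w s z) x"
      using Q_sadd[OF Q, where f="w s" and g="\<lambda>z. u s z - w s z" and x=x] by simp
    then show "Q (\<lambda>y. u s y - w s y) x \<le> Q (u s) x - w' s x" using wle[OF s, of x] by simp
  next
    fix x show "0 \<le> u 0 x - w 0 x" using u w0[of x] unfolding is_lower_solution_def by simp
  qed (rule s)
  then show ?thesis by simp
qed

lemma sol_uniq:
  assumes "is_lower_solution Q f g1" "is_lower_solution Q f g2" "s \<ge> 0"
  shows "g1 s = g2 s"
proof
  fix x
  have d1: "\<And>s x. s \<ge> 0 \<Longrightarrow> ((\<lambda>r. g1 r x) has_real_derivative Q (g1 s) x) (at s within {0..})"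
    and d2: "\<And>s x. s \<ge> 0 \<Longrightarrow> ((\<lambda>r. g2 r x) has_real_derivative Q (g2 s) x) (at s within {0..})"
    using assms unfolding is_lower_solution_def by auto
  have "g1 s x \<le> g2 s x"
    by (rule sol_sub[OF assms(2) d1]) (use assms in \<open>auto simp: is_lower_solution_def\<close>)
  moreover have "g2 s x \<le> g1 s x"
    by (rule sol_sub[OF assms(1) d2]) (use assms in \<open>auto simp: is_lower_solution_def\<close>)
  ultimately show "g1 s x = g2 s x" by simp
qed

lemma lowerT_eq:
  assumes "is_lower_solution Q f g" "s \<ge> 0"
  shows "lower_T Q s f = g s"
  unfolding lower_T_def
proof (rule the_equality)
  show "\<exists>g'. is_lower_solution Q f g' \<and> g' s = g s" using assms by blast
next
  fix h assume "\<exists>g'. is_lower_solution Q f g' \<and> g' s = h"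
  then show "h = g s" using sol_uniq assms by metis
qed

lemma lowerT_gsol: "s \<ge> 0 \<Longrightarrow> lower_T Q s f = gsol Q f s"
  by (rule lowerT_eq[OF gsol_sol[OF Q]])

lemma gsol_deriv: "s \<ge> 0 \<Longrightarrow> ((\<lambda>r. gsol Q f r x) has_real_derivative Q (gsol Q f s) x) (at s within {0..})"
  using gsol_sol[OF Q, of f] unfolding is_lower_solution_def by auto

lemma gsol_0: "gsol Q f 0 = f"
  using gsol_sol[OF Q, of f] unfolding is_lower_solution_def by auto

lemma T0: "lower_T Q 0 f = f" using lowerT_gsol gsol_0 by simp

lemma T_cadd: assumes s: "s \<ge> 0" shows "lower_T Q s (\<lambda>z. f z + c) = (\<lambda>x. lower_T Q s f x + c)"
proof -
  have "is_lower_solution Q (\<lambda>z. f z + c) (\<lambda>r x. gsol Q f r x + c)"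
    unfolding is_lower_solution_def
  proof (intro conjI allI impI)
    show "(\<lambda>x. gsol Q f 0 x + c) = (\<lambda>z. f z + c)" using gsol_0 by simp
    fix s :: real and x assume s: "s \<ge> 0"
    show "((\<lambda>r. gsol Q f r x + c) has_real_derivative Q (\<lambda>x. gsol Q f s x + c) x) (at s within {0..})"
      unfolding Q_cadd[OF Q] using gsol_deriv[OF s] by (auto intro!: derivative_eq_intros)
  qed
  then have "lower_T Q s (\<lambda>z. f z + c) = (\<lambda>x. gsol Q f s x + c)" by (rule lowerT_eq[OF _ s])
  then show ?thesis by (simp add: lowerT_gsol[OF s, of f])
qed

lemma T_hom: assumes s: "s \<ge> 0" and l: "l \<ge> 0" shows "lower_T Q s (\<lambda>z. l * f z) = (\<lambda>x. l * lower_T Q s f x)"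
proof -
  have "is_lower_solution Q (\<lambda>z. l * f z) (\<lambda>r x. l * gsol Q f r x)"
    unfolding is_lower_solution_def
  proof (intro conjI allI impI)
    show "(\<lambda>x. l * gsol Q f 0 x) = (\<lambda>z. l * f z)" using gsol_0 by simp
    fix s :: real and x assume s: "s \<ge> 0"
    show "((\<lambda>r. l * gsol Q f r x) has_real_derivative Q (\<lambda>x. l * gsol Q f s x) x) (at s within {0..})"
      unfolding Q_hom[OF Q l] using gsol_deriv[OF s] by (auto intro!: derivative_eq_intros)
  qed
  then have "lower_T Q s (\<lambda>z. l * f z) = (\<lambda>x. l * gsol Q f s x)" by (rule lowerT_eq[OF _ s])
  then show ?thesis by (simp add: lowerT_gsol[OF s, of f])
qed

lemma T_mono: assumes s: "s \<ge> 0" and le: "\<And>x. f x \<le> g x" shows "lower_T Q s f x \<le> lower_T Q s g x"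
proof -
  have "gsol Q f s x \<le> gsol Q g s x"
    by (rule sol_sub[OF gsol_sol[OF Q] gsol_deriv]) (use le s gsol_0 in auto)
  then show ?thesis using lowerT_gsol[OF s] by simp
qed

lemma T_sadd: assumes s: "s \<ge> 0"
  shows "lower_T Q s f x + lower_T Q s g x \<le> lower_T Q s (\<lambda>z. f z + g z) x"
proof -
  have "(\<lambda>r x. gsol Q f r x + gsol Q g r x) s x \<le> gsol Q (\<lambda>z. f z + g z) s x"
  proof (rule sol_sub[OF gsol_sol[OF Q], where w'="\<lambda>r x. Q (gsol Q f r) x + Q (gsol Q g r) x"])
    fix s :: real and x assume s: "s \<ge> 0"
    show "((\<lambda>r. gsol Q f r x + gsol Q g r x) has_real_derivative Q (gsol Q f s) x + Q (gsol Q g s) x) (at s within {0..})"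
      using gsol_deriv[OF s] by (auto intro!: derivative_eq_intros)
    show "Q (gsol Q f s) x + Q (gsol Q g s) x \<le> Q (\<lambda>x. gsol Q f s x + gsol Q g s x) x"
      by (rule Q_sadd[OF Q])
  qed (use s gsol_0 in auto)
  then show ?thesis using lowerT_gsol[OF s] by simp
qed

lemma T_semi: assumes r: "r \<ge> 0" and s: "s \<ge> 0"
  shows "lower_T Q s (lower_T Q r f) = lower_T Q (s + r) f"
proof -
  have "is_lower_solution Q (gsol Q f r) (\<lambda>u. gsol Q f (u + r))"
    unfolding is_lower_solution_def
  proof (intro conjI allI impI)
    show "gsol Q f (0 + r) = gsol Q f r" by simp
    fix s :: real and x assume s: "s \<ge> 0"
    have d: "((\<lambda>v. gsol Q f v x) has_real_derivative Q (gsol Q f (s + r)) x) (at (s + r) within {0..})"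
      by (rule gsol_deriv) (use s r in auto)
    have d': "((\<lambda>v. gsol Q f v x) has_real_derivative Q (gsol Q f (s + r)) x) (at ((\<lambda>u. u + r) s) within ((\<lambda>u. u + r) ` {0..}))"
      by (rule DERIV_subset[OF d]) (use r in auto)
    have "((\<lambda>v. gsol Q f v x) \<circ> (\<lambda>u. u + r) has_real_derivative Q (gsol Q f (s + r)) x * 1) (at s within {0..})"
      by (rule DERIV_image_chain[OF d']) (auto intro!: derivative_eq_intros)
    then show "((\<lambda>u. gsol Q f (u + r) x) has_real_derivative Q (gsol Q f (s + r)) x) (at s within {0..})"
      by (simp add: o_def)
  qed
  then have "lower_T Q s (gsol Q f r) = gsol Q f (s + r)" by (rule lowerT_eq[OF _ s])
  then show ?thesis using lowerT_gsol r s by simp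
qed

lemma T_lop: "s \<ge> 0 \<Longrightarrow> lop (lower_T Q s)"
  unfolding lop_def using T_mono T_cadd T_sadd T_hom by blast

lemma T_pow: "t \<ge> 0 \<Longrightarrow> (lower_T Q t ^^ n) f = lower_T Q (real n * t) f"
proof (induction n)
  case 0
  then show ?case by (simp add: T0)
next
  case (Suc n)
  then show ?case using T_semi[of "real n * t" t f] by (simp add: algebra_simps)
qed

end


context
  fixes T :: "('x::finite \<Rightarrow> real) \<Rightarrow> ('x \<Rightarrow> real)"
  assumes T: "lop T"
begin

lemma lmono: "(\<And>x. f x \<le> g x) \<Longrightarrow> T f x \<le> T g x" using T unfolding lop_def by blast
lemma lcadd: "T (\<lambda>z. f z + c) = (\<lambda>x. T f x + c)" using T unfolding lop_def by blast
lemma lsadd: "T f x + T g x \<le> T (\<lambda>z. f z + g z) x" using T unfolding lop_def by blast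
lemma lhom: "l \<ge> 0 \<Longrightarrow> T (\<lambda>z. l * f z) = (\<lambda>x. l * T f x)" using T unfolding lop_def by blast

lemma lzero: "T (\<lambda>_. 0) = (\<lambda>_. 0)"
  using lhom[of 0 "\<lambda>_. 0"] by simp

lemma lconst: "T (\<lambda>_. c) = (\<lambda>_. c)"
  using lcadd[of "\<lambda>_. 0" c] lzero by simp

lemma lge: "(\<And>z. c \<le> f z) \<Longrightarrow> c \<le> T f x"
  using lmono[of "\<lambda>_. c" f x] lconst by simp

lemma lle: "(\<And>z. f z \<le> c) \<Longrightarrow> T f x \<le> c"
  using lmono[of f "\<lambda>_. c" x] lconst by simp

lemma lsum: "finite A \<Longrightarrow> (\<Sum>y\<in>A. T (u y) x) \<le> T (\<lambda>z. \<Sum>y\<in>A. u y z) x"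
proof (induction A rule: finite_induct)
  case empty
  then show ?case by (simp add: lzero)
next
  case (insert a A)
  have "(\<Sum>y\<in>insert a A. T (u y) x) = T (u a) x + (\<Sum>y\<in>A. T (u y) x)" using insert by simp
  also have "\<dots> \<le> T (u a) x + T (\<lambda>z. \<Sum>y\<in>A. u y z) x" using insert by simp
  also have "\<dots> \<le> T (\<lambda>z. u a z + (\<Sum>y\<in>A. u y z)) x" by (rule lsadd)
  finally show ?case using insert by simp
qed

lemma uconst: "upper_op T (\<lambda>_. c) = (\<lambda>_. c)"
  unfolding upper_op_def using lconst[of "-c"] by simp

lemma umono: "(\<And>x. f x \<le> g x) \<Longrightarrow> upper_op T f x \<le> upper_op T g x"
  unfolding upper_op_def using lmono[of "\<lambda>z. - g z" "\<lambda>z. - f z" x] by simp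

lemma uge: "(\<And>z. c \<le> f z) \<Longrightarrow> c \<le> upper_op T f x"
  using umono[of "\<lambda>_. c" f x] uconst by simp

lemma uhom: "l \<ge> 0 \<Longrightarrow> upper_op T (\<lambda>z. l * f z) = (\<lambda>x. l * upper_op T f x)"
  unfolding upper_op_def using lhom[of l "\<lambda>z. - f z"] by simp

lemma usum: "finite A \<Longrightarrow> upper_op T (\<lambda>z. \<Sum>y\<in>A. u y z) x \<le> (\<Sum>y\<in>A. upper_op T (u y) x)"
  unfolding upper_op_def using lsum[of A "\<lambda>y z. - u y z" x] by (simp add: sum_negf)

lemma ucompl: "upper_op T (\<lambda>z. 1 - g z) x = 1 - T g x"
  unfolding upper_op_def using lcadd[of g "-1"] by simp

end

lemma lop_comp: "lop S \<Longrightarrow> lop T \<Longrightarrow> lop (S \<circ> (T :: ('x::finite \<Rightarrow> real) \<Rightarrow> ('x \<Rightarrow> real)))"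
proof -
  assume S: "lop S" and T: "lop T"
  show "lop (S \<circ> T)"
    unfolding lop_def o_def
  proof (intro conjI allI impI)
    fix f g :: "'x \<Rightarrow> real" and x assume "\<forall>x. f x \<le> g x"
    then show "S (T f) x \<le> S (T g) x" using lmono[OF S] lmono[OF T] by blast
  next
    fix f :: "'x \<Rightarrow> real" and c
    show "S (T (\<lambda>z. f z + c)) = (\<lambda>x. S (T f) x + c)" using lcadd[OF S] lcadd[OF T] by simp
  next
    fix f g :: "'x \<Rightarrow> real" and x
    have "S (\<lambda>z. T f z + T g z) x \<le> S (T (\<lambda>z. f z + g z)) x"
      by (rule lmono[OF S]) (rule lsadd[OF T])
    then show "S (T f) x + S (T g) x \<le> S (T (\<lambda>z. f z + g z)) x"
      using lsadd[OF S, where f="T f" and g="T g" and x=x] by simp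
  next
    fix l :: real and f :: "'x \<Rightarrow> real" assume "l \<ge> 0"
    then show "S (T (\<lambda>z. l * f z)) = (\<lambda>x. l * S (T f) x)" using lhom[OF S] lhom[OF T] by simp
  qed
qed

lemma lop_id: "lop id" unfolding lop_def by auto

lemma lop_pow: "lop (T :: ('x::finite \<Rightarrow> real) \<Rightarrow> ('x \<Rightarrow> real)) \<Longrightarrow> lop (T ^^ n)"
  by (induction n) (auto intro: lop_comp simp: lop_id)

lemma upow: "(upper_op T ^^ n) f = upper_op (T ^^ n) f"
proof (induction n arbitrary: f)
  case 0
  then show ?case by (simp add: upper_op_def)
next
  case (Suc n)
  then show ?case by (simp add: upper_op_def)
qed

lemma ucomp: "upper_op S (upper_op T f) = upper_op (S \<circ> T) f"
  by (simp add: upper_op_def o_def)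

lemma ind_sum: "finite C \<Longrightarrow> ind C z = (\<Sum>y\<in>C. ind {y} z)"
  unfolding ind_def by (simp add: sum.If_cases)

lemma ind_compl: "ind (- R) = (\<lambda>z. 1 - ind R z)"
  unfolding ind_def by auto

lemma ind_nonneg: "ind A z \<ge> 0" unfolding ind_def by auto
lemma ind_le1: "ind A z \<le> 1" unfolding ind_def by auto



lemma RA_I:
  fixes T :: "('x::finite \<Rightarrow> real) \<Rightarrow> ('x \<Rightarrow> real)"
  assumes "\<forall>x. upper_op (T ^^ n) (ind {y}) x > 0" "n \<ge> 1"
  shows "y \<in> RA_set T"
  unfolding RA_set_def
proof (intro CollectI exI[of _ n] conjI)
  show "1 \<le> n" by fact
  have "finite (range ((upper_op T ^^ n) (ind {y})))" by simp
  then show "0 < Min (range ((upper_op T ^^ n) (ind {y})))"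
    using assms(1) by (simp add: upow)
qed

lemma RA_D:
  fixes T :: "('x::finite \<Rightarrow> real) \<Rightarrow> ('x \<Rightarrow> real)"
  assumes "y \<in> RA_set T"
  shows "\<exists>n\<ge>1. \<forall>x. upper_op (T ^^ n) (ind {y}) x > 0"
proof -
  obtain n where n: "n \<ge> 1" "Min (range ((upper_op T ^^ n) (ind {y}))) > 0"
    using assms unfolding RA_set_def by blast
  have "finite (range ((upper_op T ^^ n) (ind {y})))" by simp
  then have "\<forall>x. upper_op (T ^^ n) (ind {y}) x > 0" using n(2) by (simp add: upow)
  then show ?thesis using n(1) by blast
qed

lemma disc_erg_RA:
  fixes T :: "('x::finite \<Rightarrow> real) \<Rightarrow> ('x \<Rightarrow> real)"
  assumes T: "lop T" and erg: "\<And>f. \<exists>c. \<forall>x. (\<lambda>n. (T ^^ n) f x) \<longlonglongrightarrow> c"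
  shows "regularly_absorbing T"
proof -
  have "\<forall>f. \<exists>c. \<forall>x. (\<lambda>n. (T ^^ n) f x) \<longlonglongrightarrow> c" using erg by blast
  then obtain cl where cl: "\<And>f x. (\<lambda>n. (T ^^ n) f x) \<longlonglongrightarrow> cl f" by metis
  define a where "a y = - cl (\<lambda>z. - ind {y} z)" for y
  have ulim: "(\<lambda>n. upper_op (T ^^ n) (ind {y}) x) \<longlonglongrightarrow> a y" for y x
    unfolding upper_op_def a_def by (intro tendsto_minus cl)
  have Tn: "lop (T ^^ n)" for n by (rule lop_pow[OF T])
  have RAI: "y \<in> RA_set T" if ay: "a y > 0" for y
  proof -
    have "eventually (\<lambda>n. \<forall>x. upper_op (T ^^ n) (ind {y}) x > 0) sequentially"
      by (rule eventually_all_finite) (rule order_tendstoD(1)[OF ulim ay])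
    then obtain N where N: "\<And>n. n \<ge> N \<Longrightarrow> \<forall>x. upper_op (T ^^ n) (ind {y}) x > 0"
      unfolding eventually_sequentially by blast
    show ?thesis by (rule RA_I[OF N[of "Suc N"]]) auto
  qed
  have sumge: "upper_op (T ^^ n) (ind C) x \<le> (\<Sum>y\<in>C. upper_op (T ^^ n) (ind {y}) x)" for C n x
  proof -
    have "(\<lambda>z. \<Sum>y\<in>C. ind {y} z) = ind C"
    proof (rule ext)
      fix z show "(\<Sum>y\<in>C. ind {y} z) = ind C z" by (rule ind_sum[symmetric]) simp
    qed
    then show ?thesis using usum[OF Tn[of n], of C "\<lambda>y. ind {y}" x] by simp
  qed
  fix x0 :: 'x
  have ne: "RA_set T \<noteq> {}"
  proof
    assume e: "RA_set T = {}"
    have "1 \<le> (\<Sum>y\<in>UNIV. a y)"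
    proof (rule LIMSEQ_le_const[OF tendsto_sum[OF ulim]])
      show "\<exists>N. \<forall>n\<ge>N. 1 \<le> (\<Sum>y\<in>UNIV. upper_op (T ^^ n) (ind {y}) x0)"
      proof (intro exI allI impI)
        fix n
        have "ind (UNIV :: 'x set) = (\<lambda>_. 1)" by (simp add: ind_def fun_eq_iff)
        then have "upper_op (T ^^ n) (ind UNIV) x0 = 1" using uconst[OF Tn] by simp
        then show "1 \<le> (\<Sum>y\<in>UNIV. upper_op (T ^^ n) (ind {y}) x0)" using sumge[of n UNIV x0] by simp
      qed
    qed
    moreover have "(\<Sum>y\<in>UNIV. a y) \<le> 0"
    proof (rule sum_nonpos)
      fix y show "a y \<le> 0"
      proof (rule ccontr)
        assume "\<not> a y \<le> 0" then have "a y > 0" by simp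
        then show False using RAI e by blast
      qed
    qed
    ultimately show False by simp
  qed
  have reach: "\<exists>n\<ge>1. (T ^^ n) (ind (RA_set T)) x > 0" if x: "x \<notin> RA_set T" for x
  proof (rule ccontr)
    let ?R = "RA_set T"
    assume nn: "\<not> (\<exists>n\<ge>1. (T ^^ n) (ind ?R) x > 0)"
    have cR: "cl (ind ?R) \<le> 0"
      by (rule LIMSEQ_le_const2[OF cl[of "ind ?R" x]]) (use nn in \<open>auto intro: exI[of _ 1] simp: not_less\<close>)
    have "1 \<le> (\<Sum>y\<in>-?R. a y)"
    proof (rule LIMSEQ_le_const[OF tendsto_sum[OF ulim]])
      show "\<exists>N. \<forall>n\<ge>N. 1 \<le> (\<Sum>y\<in>-?R. upper_op (T ^^ n) (ind {y}) x)"
      proof (intro exI[of _ 1] allI impI)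
        fix n :: nat assume n: "n \<ge> 1"
        have "upper_op (T ^^ n) (ind (-?R)) x = 1 - (T ^^ n) (ind ?R) x"
          unfolding ind_compl by (rule ucompl[OF Tn])
        moreover have "(T ^^ n) (ind ?R) x \<le> 0" using nn n by (simp add: not_less)
        ultimately show "1 \<le> (\<Sum>y\<in>-?R. upper_op (T ^^ n) (ind {y}) x)" using sumge[of n "-?R" x] by simp
      qed
    qed
    moreover have "(\<Sum>y\<in>-?R. a y) \<le> 0"
    proof (rule sum_nonpos)
      fix y assume y: "y \<in> -?R" show "a y \<le> 0"
      proof (rule ccontr)
        assume "\<not> a y \<le> 0" then have "a y > 0" by simp
        then show False using RAI y by blast
      qed
    qed
    ultimately show False by simp
  qed
  show ?thesis unfolding regularly_absorbing_def using ne reach by blast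
qed



lemma sumge_gen:
  fixes S :: "('x::finite \<Rightarrow> real) \<Rightarrow> ('x \<Rightarrow> real)"
  assumes S: "lop S"
  shows "upper_op S (ind C) x \<le> (\<Sum>y\<in>C. upper_op S (ind {y}) x)"
proof -
  have "(\<lambda>z. \<Sum>y\<in>C. ind {y} z) = ind C"
  proof (rule ext)
    fix z show "(\<Sum>y\<in>C. ind {y} z) = ind C z" by (rule ind_sum[symmetric]) simp
  qed
  then show ?thesis using usum[OF S, of C "\<lambda>y. ind {y}" x] by simp
qed

lemma U_persist:
  fixes T :: "('x::finite \<Rightarrow> real) \<Rightarrow> ('x \<Rightarrow> real)"
  assumes T: "lop T" and pos: "\<forall>x. upper_op (T ^^ n) g x > 0" and nm: "n \<le> m"
  shows "\<forall>x. upper_op (T ^^ m) g x > 0"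
proof
  fix x
  define c where "c = Min (range (upper_op (T ^^ n) g))"
  have fin: "finite (range (upper_op (T ^^ n) g))" by simp
  have c0: "c > 0" unfolding c_def using fin pos by simp
  have cle: "c \<le> upper_op (T ^^ n) g z" for z unfolding c_def using fin by simp
  have "T ^^ m = T ^^ (m - n) \<circ> T ^^ n" using nm by (simp add: funpow_add[symmetric])
  then have "upper_op (T ^^ m) g = upper_op (T ^^ (m - n)) (upper_op (T ^^ n) g)" by (simp add: ucomp)
  moreover have "c \<le> upper_op (T ^^ (m - n)) (upper_op (T ^^ n) g) x"
    by (rule uge[OF lop_pow[OF T]]) (rule cle)
  ultimately show "upper_op (T ^^ m) g x > 0" using c0 by simp
qed

lemma disc_contr:
  fixes T :: "('x::finite \<Rightarrow> real) \<Rightarrow> ('x \<Rightarrow> real)"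
  assumes T: "lop T" and RA: "regularly_absorbing T"
  shows "\<exists>N \<epsilon>. N \<ge> 1 \<and> 0 < \<epsilon> \<and> \<epsilon> \<le> 1 \<and> (\<forall>h m M. (\<forall>z. m \<le> h z \<and> h z \<le> M) \<longrightarrow>
     (\<exists>m' M'. (\<forall>z. m' \<le> (T ^^ N) h z \<and> (T ^^ N) h z \<le> M') \<and> M' - m' \<le> (1 - \<epsilon>/2) * (M - m)))"
proof -
  define R where "R = RA_set T"
  have Tn: "lop (T ^^ n)" for n by (rule lop_pow[OF T])
  have closed: "upper_op T (ind {w}) y \<le> 0" if y: "y \<in> R" and w: "w \<notin> R" for y w
  proof (rule ccontr)
    assume "\<not> upper_op T (ind {w}) y \<le> 0"
    then have \<delta>: "upper_op T (ind {w}) y > 0" by simp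
    define \<delta> where "\<delta> = upper_op T (ind {w}) y"
    obtain n where n: "n \<ge> 1" "\<forall>x. upper_op (T ^^ n) (ind {y}) x > 0"
      using RA_D[of y T] y unfolding R_def by blast
    have ge: "\<delta> * ind {y} z \<le> upper_op T (ind {w}) z" for z
    proof (cases "z = y")
      case True then show ?thesis by (simp add: \<delta>_def ind_def)
    next
      case False
      have "0 \<le> upper_op T (ind {w}) z" by (rule uge[OF T]) (rule ind_nonneg)
      then show ?thesis using False by (simp add: ind_def)
    qed
    have "\<forall>x. upper_op (T ^^ Suc n) (ind {w}) x > 0"
    proof
      fix x
      have "upper_op (T ^^ n) (\<lambda>z. \<delta> * ind {y} z) x \<le> upper_op (T ^^ n) (upper_op T (ind {w})) x"
        by (rule umono[OF Tn]) (rule ge)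
      moreover have "upper_op (T ^^ n) (\<lambda>z. \<delta> * ind {y} z) x = \<delta> * upper_op (T ^^ n) (ind {y}) x"
        using uhom[OF Tn[of n], of \<delta> "ind {y}"] \<delta> unfolding \<delta>_def by simp
      moreover have "\<delta> * upper_op (T ^^ n) (ind {y}) x > 0" using \<delta> n(2) unfolding \<delta>_def by simp
      moreover have "upper_op (T ^^ n) (upper_op T (ind {w})) = upper_op (T ^^ Suc n) (ind {w})"
        by (simp only: ucomp funpow_Suc_right)
      ultimately show "upper_op (T ^^ Suc n) (ind {w}) x > 0" by simp
    qed
    then have "w \<in> RA_set T" by (rule RA_I) simp
    then show False using w unfolding R_def by simp
  qed
  have absorb: "ind R x \<le> T (ind R) x" for x
  proof (cases "x \<in> R")
    case True
    have "upper_op T (ind (- R)) x \<le> (\<Sum>w\<in>-R. upper_op T (ind {w}) x)" by (rule sumge_gen[OF T])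
    also have "\<dots> \<le> 0" by (rule sum_nonpos) (use closed True in auto)
    finally have "upper_op T (ind (- R)) x \<le> 0" .
    moreover have "upper_op T (ind (- R)) x = 1 - T (ind R) x"
      unfolding ind_compl by (rule ucompl[OF T])
    ultimately show ?thesis using True by (simp add: ind_def)
  next
    case False
    have "0 \<le> T (ind R) x" by (rule lge[OF T]) (rule ind_nonneg)
    then show ?thesis using False by (simp add: ind_def)
  qed
  have incr: "(T ^^ m) (ind R) x \<le> (T ^^ Suc m) (ind R) x" for m x
  proof -
    have "(T ^^ m) (ind R) x \<le> (T ^^ m) (T (ind R)) x" by (rule lmono[OF Tn]) (rule absorb)
    then show ?thesis unfolding funpow_Suc_right o_def .
  qed
  have incr2: "(T ^^ m) (ind R) x \<le> (T ^^ k) (ind R) x" if "m \<le> k" for m k x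
  proof -
    have "incseq (\<lambda>m. (T ^^ m) (ind R) x)" by (rule incseq_SucI) (rule incr)
    then show ?thesis using that by (rule incseqD)
  qed
  have E1: "\<forall>y\<in>R. eventually (\<lambda>m. \<forall>x. upper_op (T ^^ m) (ind {y}) x > 0) sequentially"
  proof
    fix y assume y: "y \<in> R"
    obtain n where n: "n \<ge> 1" "\<forall>x. upper_op (T ^^ n) (ind {y}) x > 0"
      using RA_D[of y T] y unfolding R_def by blast
    show "eventually (\<lambda>m. \<forall>x. upper_op (T ^^ m) (ind {y}) x > 0) sequentially"
      unfolding eventually_sequentially using U_persist[OF T n(2)] by blast
  qed
  have E2: "eventually (\<lambda>m. (T ^^ m) (ind R) z > 0) sequentially" for z
  proof (cases "z \<in> R")
    case True
    have "(T ^^ m) (ind R) z > 0" for m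
      using incr2[of 0 m z] True by (simp add: ind_def)
    then show ?thesis by simp
  next
    case False
    then obtain n where n: "n \<ge> 1" "(T ^^ n) (ind R) z > 0"
      using RA unfolding regularly_absorbing_def R_def by blast
    show ?thesis unfolding eventually_sequentially
      using incr2[of n _ z] n(2) by (auto intro!: exI[of _ n] intro: order_less_le_trans)
  qed
  have "eventually (\<lambda>m. m \<ge> 1 \<and> (\<forall>y\<in>R. \<forall>x. upper_op (T ^^ m) (ind {y}) x > 0) \<and> (\<forall>z. (T ^^ m) (ind R) z > 0)) sequentially"
    by (intro eventually_conj eventually_ball_finite eventually_all_finite E1 E2)
      (auto simp: eventually_sequentially)
  then obtain N where N1: "N \<ge> 1" and NU: "\<forall>y\<in>R. \<forall>x. upper_op (T ^^ N) (ind {y}) x > 0"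
    and NT: "\<forall>z. (T ^^ N) (ind R) z > 0"
    unfolding eventually_sequentially by blast
  define V where "V = (\<lambda>p. upper_op (T ^^ N) (ind {fst p}) (snd p)) ` (R \<times> UNIV) \<union> range ((T ^^ N) (ind R)) \<union> {1}"
  define \<epsilon> where "\<epsilon> = Min V"
  have finV: "finite V" unfolding V_def by simp
  have \<epsilon>0: "\<epsilon> > 0" unfolding \<epsilon>_def using finV NU NT by (auto simp: V_def)
  have \<epsilon>1: "\<epsilon> \<le> 1" unfolding \<epsilon>_def using finV by (auto simp: V_def)
  have \<epsilon>U: "\<epsilon> \<le> upper_op (T ^^ N) (ind {y}) x" if "y \<in> R" for y x
  proof -
    have "upper_op (T ^^ N) (ind {y}) x \<in> V" unfolding V_def using that by (auto intro!: image_eqI[of _ _ "(y, x)"])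
    then show ?thesis unfolding \<epsilon>_def using finV by simp
  qed
  have \<epsilon>T: "\<epsilon> \<le> (T ^^ N) (ind R) z" for z
  proof -
    have "(T ^^ N) (ind R) z \<in> V" unfolding V_def by auto
    then show ?thesis unfolding \<epsilon>_def using finV by simp
  qed
  define S where "S = T ^^ N"
  have S: "lop S" unfolding S_def by (rule Tn)
  have contr: "\<exists>m' M'. (\<forall>z. m' \<le> S h z \<and> S h z \<le> M') \<and> M' - m' \<le> (1 - \<epsilon>/2) * (M - m)"
    if hb: "\<forall>z. m \<le> h z \<and> h z \<le> M" for h m M
  proof -
    have mM: "m \<le> M" using hb by (meson order_trans)
    have lo: "m \<le> S h x" for x by (rule lge[OF S]) (use hb in auto)
    have hi: "S h x \<le> M" for x by (rule lle[OF S]) (use hb in auto)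
    show ?thesis
    proof (cases "\<exists>y\<in>R. h y \<le> (m + M) / 2")
      case True
      then obtain y where y: "y \<in> R" "h y \<le> (m + M) / 2" by blast
      define d where "d = M - h y"
      have d: "d \<ge> (M - m) / 2" "d \<ge> 0" unfolding d_def using y mM by auto
      have up: "S h x \<le> M - \<epsilon> * ((M - m) / 2)" for x
      proof -
        have "S h x \<le> S (\<lambda>z. d * (- ind {y} z) + M) x"
          by (rule lmono[OF S]) (use hb in \<open>auto simp: ind_def d_def\<close>)
        also have "\<dots> = M - d * upper_op S (ind {y}) x"
          using lcadd[OF S, of "\<lambda>z. d * (- ind {y} z)" M] lhom[OF S, of d "\<lambda>z. - ind {y} z"] d(2)
          by (simp add: upper_op_def)
        also have "\<dots> \<le> M - ((M - m) / 2) * \<epsilon>"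
        proof -
          have "((M - m) / 2) * \<epsilon> \<le> d * upper_op S (ind {y}) x"
            by (rule mult_mono) (use d \<epsilon>0 \<epsilon>U[OF y(1)] mM in \<open>auto simp: S_def\<close>)
          then show ?thesis by simp
        qed
        finally show ?thesis by (simp add: mult.commute)
      qed
      show ?thesis
        by (rule exI[of _ m], rule exI[of _ "M - \<epsilon> * ((M - m) / 2)"]) (use lo up in \<open>auto simp: algebra_simps\<close>)
    next
      case False
      have low: "m + \<epsilon> * ((M - m) / 2) \<le> S h x" for x
      proof -
        have "S (\<lambda>z. ((M - m) / 2) * ind R z + m) x \<le> S h x"
        proof (rule lmono[OF S])
          fix z show "(M - m) / 2 * ind R z + m \<le> h z"
          proof (cases "z \<in> R")
            case True
            then have "h z > (m + M) / 2" using False by (meson not_le)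
            then show ?thesis using True by (simp add: ind_def field_simps)
          next
            case False
            then show ?thesis using hb by (simp add: ind_def)
          qed
        qed
        moreover have "S (\<lambda>z. ((M - m) / 2) * ind R z + m) x = ((M - m) / 2) * S (ind R) x + m"
          using lcadd[OF S, of "\<lambda>z. ((M - m) / 2) * ind R z" m] lhom[OF S, of "(M - m) / 2" "ind R"] mM
          by simp
        moreover have "((M - m) / 2) * \<epsilon> \<le> ((M - m) / 2) * S (ind R) x"
          by (rule mult_left_mono) (use \<epsilon>T mM in \<open>auto simp: S_def\<close>)
        ultimately show ?thesis by (simp add: mult.commute)
      qed
      show ?thesis
        by (rule exI[of _ "m + \<epsilon> * ((M - m) / 2)"], rule exI[of _ M]) (use low hi in \<open>auto simp: algebra_simps\<close>)
    qed
  qed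
  show ?thesis using N1 \<epsilon>0 \<epsilon>1 contr unfolding S_def by blast
qed



theorem corollary1:
  fixes Q :: "('x::finite \<Rightarrow> real) \<Rightarrow> ('x \<Rightarrow> real)" and t :: real
  assumes "lower_transition_rate_operator Q" and "t > 0"
  shows "ergodic Q \<longleftrightarrow> regularly_absorbing (lower_T Q t)"
proof -
  note Q = assms(1)
  have t0: "t \<ge> 0" using assms(2) by simp
  define T where "T = lower_T Q t"
  have T: "lop T" unfolding T_def by (rule T_lop[OF Q t0])
  have Tp: "(T ^^ n) f = lower_T Q (real n * t) f" for n f unfolding T_def by (rule T_pow[OF Q t0])
  have lopQ: "lop (lower_T Q s)" if "s \<ge> 0" for s by (rule T_lop[OF Q that])
  show ?thesis
  proof
    assume erg: "ergodic Q"
    show "regularly_absorbing (lower_T Q t)"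
      unfolding T_def[symmetric]
    proof (rule disc_erg_RA[OF T])
      fix f :: "'x \<Rightarrow> real"
      obtain c where c: "\<And>x. ((\<lambda>s. lower_T Q s f x) \<longlongrightarrow> c) at_top"
        using erg unfolding ergodic_def by blast
      have fl: "filterlim (\<lambda>n. t * real n) at_top sequentially"
        by (rule filterlim_tendsto_pos_mult_at_top[OF tendsto_const assms(2) filterlim_real_sequentially])
      have "(\<lambda>n. (T ^^ n) f x) \<longlonglongrightarrow> c" for x
      proof -
        have "((\<lambda>n. lower_T Q (t * real n) f x) \<longlongrightarrow> c) sequentially"
          by (rule filterlim_compose[OF c fl])
        then show ?thesis by (simp add: Tp mult.commute)
      qed
      then show "\<exists>c. \<forall>x. (\<lambda>n. (T ^^ n) f x) \<longlonglongrightarrow> c" by blast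
    qed
  next
    assume RA: "regularly_absorbing (lower_T Q t)"
    then have RA': "regularly_absorbing T" unfolding T_def .
    obtain N \<epsilon> where N: "N \<ge> 1" and \<epsilon>: "0 < \<epsilon>" "\<epsilon> \<le> 1" and
      contr: "\<And>h m M. (\<forall>z. m \<le> h z \<and> h z \<le> M) \<Longrightarrow>
        (\<exists>m' M'. (\<forall>z. m' \<le> (T ^^ N) h z \<and> (T ^^ N) h z \<le> M') \<and> M' - m' \<le> (1 - \<epsilon>/2) * (M - m))"
      using disc_contr[OF T RA'] by blast
    define \<tau> where "\<tau> = real N * t"
    have \<tau>: "\<tau> > 0" unfolding \<tau>_def using N assms(2) by simp
    define q where "q = 1 - \<epsilon> / 2"
    have q: "0 \<le> q" "q < 1" unfolding q_def using \<epsilon> by auto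
    show "ergodic Q"
      unfolding ergodic_def
    proof
      fix f :: "'x \<Rightarrow> real"
      define G where "G s = lower_T Q s f" for s
      define a where "a k = Min (range (G (real k * \<tau>)))" for k :: nat
      define b where "b k = Max (range (G (real k * \<tau>)))" for k :: nat
      have fin: "finite (range h)" for h :: "'x \<Rightarrow> real" by simp
      have ab: "a k \<le> G (real k * \<tau>) z" "G (real k * \<tau>) z \<le> b k" for k z
        unfolding a_def b_def using fin by auto
      have stay: "lo \<le> G s x \<and> G s x \<le> hi"
        if s0: "0 \<le> s0" "s0 \<le> s" and bd: "\<And>z. lo \<le> G s0 z \<and> G s0 z \<le> hi" for s0 s lo hi x
      proof -
        have "G s = lower_T Q (s - s0) (G s0)"
          unfolding G_def using T_semi[OF Q s0(1), of "s - s0" f] s0 by simp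
        moreover have "lo \<le> lower_T Q (s - s0) (G s0) x" by (rule lge[OF lopQ]) (use s0 bd in auto)
        moreover have "lower_T Q (s - s0) (G s0) x \<le> hi" by (rule lle[OF lopQ]) (use s0 bd in auto)
        ultimately show ?thesis by simp
      qed
      have step: "G (real (Suc k) * \<tau>) = (T ^^ N) (G (real k * \<tau>))" for k
      proof -
        have "(T ^^ N) (G (real k * \<tau>)) = lower_T Q \<tau> (lower_T Q (real k * \<tau>) f)"
          unfolding Tp \<tau>_def G_def by simp
        also have "\<dots> = lower_T Q (\<tau> + real k * \<tau>) f"
          by (rule T_semi[OF Q]) (use \<tau> in auto)
        finally show ?thesis unfolding G_def by (simp add: algebra_simps)
      qed
      have aincr: "a k \<le> a (Suc k)" for k
      proof -
        have "a k \<le> G (real (Suc k) * \<tau>) z" for z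
          using stay[of "real k * \<tau>" "real (Suc k) * \<tau>" "a k" "b k" z] ab \<tau> by auto
        then show ?thesis unfolding a_def[of "Suc k"] using fin by simp
      qed
      have bdecr: "b (Suc k) \<le> b k" for k
      proof -
        have "G (real (Suc k) * \<tau>) z \<le> b k" for z
          using stay[of "real k * \<tau>" "real (Suc k) * \<tau>" "a k" "b k" z] ab \<tau> by auto
        then show ?thesis unfolding b_def[of "Suc k"] using fin by simp
      qed
      have osc1: "b (Suc k) - a (Suc k) \<le> q * (b k - a k)" for k
      proof -
        obtain m' M' where mM: "\<forall>z. m' \<le> (T ^^ N) (G (real k * \<tau>)) z \<and> (T ^^ N) (G (real k * \<tau>)) z \<le> M'"
          and d: "M' - m' \<le> q * (b k - a k)"
          using contr[of "a k" "G (real k * \<tau>)" "b k"] ab unfolding q_def by blast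
        have "b (Suc k) \<le> M'" unfolding b_def using fin mM step by auto
        moreover have "m' \<le> a (Suc k)" unfolding a_def using fin mM step by auto
        ultimately show ?thesis using d by simp
      qed
      have osc: "b k - a k \<le> q ^ k * (b 0 - a 0)" for k
      proof (induction k)
        case 0 then show ?case by simp
      next
        case (Suc k)
        have "b (Suc k) - a (Suc k) \<le> q * (b k - a k)" by (rule osc1)
        also have "\<dots> \<le> q * (q ^ k * (b 0 - a 0))" by (rule mult_left_mono[OF Suc.IH q(1)])
        finally show ?case by simp
      qed
      have ainc: "incseq a" by (rule incseq_SucI) (rule aincr)
      have bdec: "decseq b" by (rule decseq_SucI) (rule bdecr)
      have ab_le: "a j \<le> b k" for j k
      proof -
        have "a j \<le> a (max j k)" using ainc by (simp add: incseqD)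
        also have "\<dots> \<le> G (real (max j k) * \<tau>) undefined" by (rule ab)
        also have "\<dots> \<le> b (max j k)" by (rule ab)
        also have "\<dots> \<le> b k" using bdec by (simp add: decseqD)
        finally show ?thesis .
      qed
      define c where "c = (SUP k. a k)"
      have bdd: "bdd_above (range a)" by (rule bdd_aboveI[where M="b 0"]) (use ab_le in auto)
      have ac: "a k \<le> c" for k unfolding c_def by (rule cSUP_upper[OF _ bdd]) simp
      have cb: "c \<le> b k" for k unfolding c_def by (rule cSUP_least) (auto intro: ab_le)
      have "((\<lambda>s. lower_T Q s f x) \<longlongrightarrow> c) at_top" for x
      proof (rule tendstoI)
        fix e :: real assume e: "e > 0"
        have "(\<lambda>k. q ^ k * (b 0 - a 0)) \<longlonglongrightarrow> 0 * (b 0 - a 0)"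
          by (intro tendsto_intros) (use q in simp)
        then have "eventually (\<lambda>k. q ^ k * (b 0 - a 0) < e) sequentially"
          using e by (simp add: order_tendstoD(2))
        then obtain k where k: "q ^ k * (b 0 - a 0) < e" by (meson eventually_sequentially order_refl)
        show "eventually (\<lambda>s. dist (lower_T Q s f x) c < e) at_top"
          using eventually_ge_at_top[of "real k * \<tau>"]
        proof (rule eventually_mono)
          fix s assume s: "real k * \<tau> \<le> s"
          have "a k \<le> G s x \<and> G s x \<le> b k"
            by (rule stay[of "real k * \<tau>"]) (use s \<tau> ab in auto)
          then have "dist (G s x) c \<le> b k - a k" using ac[of k] cb[of k] by (auto simp: dist_real_def abs_le_iff)
          then show "dist (lower_T Q s f x) c < e" using osc[of k] k unfolding G_def by simp
        qed
      qed
      then show "\<exists>c. \<forall>x. ((\<lambda>t. lower_T Q t f x) \<longlongrightarrow> c) at_top" by blast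
    qed
  qed
qed


end
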